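(* Let $n\ge 2$ and let $\mathbb{A}=(A_{ij})_{i,j=1}^n$ be an operator matrix as described in the context. Let $T=(T_1,\ldots,T_{n-1}):\mathcal{D}(T_1)\times\cdots\times\mathcal{D}(T_{n-1})\to X_n$, $T(x_1,\dots,x_{n-1})=\sum_j T_jx_j$, where each $T_j:\mathcal{D}(T_j)\subset X_j\to X_n$ is linear and relatively $A_{jj}$-bounded. Assume moreover that $\mathbb{A}_k$ is closed for $k=2,\ldots,n$. If $\sigma(A_{kk})\cup\sigma(\mathbb{A}_k)\ne\mathbb{C}$ for all $k\in\{2,\ldots,n-2\}$, then $T(\lambda-\mathbb{A}_{n-1})^{-1}$ is bounded for every $\lambda\notin\sigma(A_{n-1,n-1})\cup\sigma(\mathbb{A}_{n-1})$. In particular, $T$ is relatively $\mathbb{A}_{n-1}$-bounded if $\sigma(A_{kk})\cup\sigma(\mathbb{A}_k)\ne\mathbb{C}$ for all $k\in\{2,\ldots,n-1\}$.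
   Context: Let $X_1,\ldots,X_n$ be complex Banach spaces and $X=X_1\times\cdots\times X_n$ with norm $\|x\|=\sum_i\|x_i\|_{X_i}$. For $i,j\in\{1,\ldots,n\}$, $A_{ij}:\mathcal{D}(A_{ij})\subset X_j\to X_i$ are linear operators with $A_{ii}$ closed and, for $i\ne j$, $A_{ij}$ relatively $A_{jj}$-bounded (i.e. $\mathcal{D}(A_{jj})\subset\mathcal{D}(A_{ij})$ and there are $\alpha,\beta\ge0$ with $\|A_{ij}x\|\le\alpha\|x\|+\beta\|A_{jj}x\|$ for $x\in\mathcal{D}(A_{jj})$). The operator matrix $\mathbb{A}=(A_{ij})$ acts on $\mathcal{D}(\mathbb{A})=\mathcal{D}(A_{11})\times\cdots\times\mathcal{D}(A_{nn})$ by $(\mathbb{A}x)_i=\sum_jA_{ij}x_j$. For $1\le k\le n$, $\mathbb{A}_k:=(A_{ij})_{i,j=1}^k$ is the upper-left block acting on $X_1\times\cdots\times X_k$ with domain $\mathcal{D}(A_{11})\times\cdots\times\mathcal{D}(A_{kk})$. For a linear operator $S$ on a Banach space $Y$, $\sigma(S)$ is the set of $\lambda$ for which $\lambda-S:\mathcal{D}(S)\to Y$ is not bijective with bounded inverse. Relative boundedness of an operator with respect to a (block) operator is defined analogously. *)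

theory Defs
  imports "HOL-Analysis.Analysis"
begin

text \<open>The Banach spaces X_1,...,X_n are modelled as closed complex-linear
subspaces X i (i = 1..n) of one complex Banach space 'a (every finite family of Banach
spaces embeds isometrically as closed subspaces into, e.g., their l1-sum, so this is no
loss of generality). A linear operator is a pair (domain set, map on the ambient type).
Elements of X_1 x ... x X_k are functions x :: nat \<Rightarrow> 'a with x i \<in> X i for i in {1..k}
and x i = 0 otherwise; the norm is the sum of the component norms.\<close>

class complex_normed_vector = real_normed_vector +
  fixes scaleC :: "complex \<Rightarrow> 'a \<Rightarrow> 'a"
  assumes scaleC_add_right: "scaleC a (x + y) = scaleC a x + scaleC a y"
    and scaleC_add_left: "scaleC (a + b) x = scaleC a x + scaleC b x"
    and scaleC_scaleC: "scaleC a (scaleC b x) = scaleC (a * b) x"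
    and scaleC_one: "scaleC 1 x = x"
    and scaleC_of_real: "scaleC (of_real r) x = scaleR r x"
    and norm_scaleC: "norm (scaleC a x) = cmod a * norm x"

definition csubspace :: "'a::complex_normed_vector set \<Rightarrow> bool" where
  "csubspace S \<longleftrightarrow> 0 \<in> S \<and> (\<forall>x\<in>S. \<forall>y\<in>S. x + y \<in> S) \<and> (\<forall>c. \<forall>x\<in>S. scaleC c x \<in> S)"

definition banach_subspace :: "'a::{complex_normed_vector,banach} set \<Rightarrow> bool" where
  "banach_subspace S \<longleftrightarrow> csubspace S \<and> closed S"

definition lin_op :: "'a::complex_normed_vector set \<Rightarrow> 'a set \<Rightarrow> 'a set \<Rightarrow> ('a \<Rightarrow> 'a) \<Rightarrow> bool" where
  "lin_op Y Z D f \<longleftrightarrow> csubspace D \<and> D \<subseteq> Y \<and> f ` D \<subseteq> Z \<and>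
     (\<forall>x\<in>D. \<forall>y\<in>D. f (x + y) = f x + f y) \<and> (\<forall>c. \<forall>x\<in>D. f (scaleC c x) = scaleC c (f x))"

definition closed_op :: "'a::real_normed_vector set \<Rightarrow> ('a \<Rightarrow> 'a) \<Rightarrow> bool" where
  "closed_op D f \<longleftrightarrow> closed {(x, f x) | x. x \<in> D}"

definition rel_bounded_gen :: "('v \<Rightarrow> real) \<Rightarrow> ('w \<Rightarrow> real) \<Rightarrow> 'v set \<Rightarrow> ('v \<Rightarrow> 'w) \<Rightarrow> 'v set \<Rightarrow> ('v \<Rightarrow> 'v) \<Rightarrow> bool" where
  "rel_bounded_gen Nx Nf Df f Dg g \<longleftrightarrow> Dg \<subseteq> Df \<and>
     (\<exists>\<alpha> \<beta>. \<alpha> \<ge> 0 \<and> \<beta> \<ge> 0 \<and> (\<forall>x\<in>Dg. Nf (f x) \<le> \<alpha> * Nx x + \<beta> * Nx (g x)))"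

definition resolvent_ok :: "'v set \<Rightarrow> ('v \<Rightarrow> real) \<Rightarrow> 'v set \<Rightarrow> ('v \<Rightarrow> 'v) \<Rightarrow> bool" where
  "resolvent_ok Y N D g \<longleftrightarrow> bij_betw g D Y \<and> (\<exists>C. \<forall>y\<in>Y. N (the_inv_into D g y) \<le> C * N y)"

definition spec :: "'a::complex_normed_vector set \<Rightarrow> 'a set \<Rightarrow> ('a \<Rightarrow> 'a) \<Rightarrow> complex set" where
  "spec Y D f = {l. \<not> resolvent_ok Y norm D (\<lambda>x. scaleC l x - f x)}"

definition PS :: "(nat \<Rightarrow> 'a::zero set) \<Rightarrow> nat \<Rightarrow> (nat \<Rightarrow> 'a) set" where
  "PS X k = {x. \<forall>i. (i \<in> {1..k} \<longrightarrow> x i \<in> X i) \<and> (i \<notin> {1..k} \<longrightarrow> x i = 0)}"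

definition PN :: "nat \<Rightarrow> (nat \<Rightarrow> 'a::real_normed_vector) \<Rightarrow> real" where
  "PN k x = (\<Sum>i=1..k. norm (x i))"

definition BD :: "(nat \<Rightarrow> nat \<Rightarrow> 'a::zero set) \<Rightarrow> nat \<Rightarrow> (nat \<Rightarrow> 'a) set" where
  "BD DA k = PS (\<lambda>i. DA i i) k"

text \<open>Action of the upper-left k x k block A_k.\<close>
definition BA :: "(nat \<Rightarrow> nat \<Rightarrow> 'a \<Rightarrow> 'a::comm_monoid_add) \<Rightarrow> nat \<Rightarrow> (nat \<Rightarrow> 'a) \<Rightarrow> nat \<Rightarrow> 'a" where
  "BA A k x i = (if i \<in> {1..k} then (\<Sum>j=1..k. A i j (x j)) else 0)"

definition block_closed :: "(nat \<Rightarrow> 'a::real_normed_vector set) \<Rightarrow> (nat \<Rightarrow> nat \<Rightarrow> 'a set) \<Rightarrow> (nat \<Rightarrow> nat \<Rightarrow> 'a \<Rightarrow> 'a) \<Rightarrow> nat \<Rightarrow> bool" where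
  "block_closed X DA A k \<longleftrightarrow>
     (\<forall>xs x y. (\<forall>m. xs m \<in> BD DA k) \<and> x \<in> PS X k \<and> y \<in> PS X k \<and>
        (\<lambda>m. PN k (\<lambda>i. xs m i - x i)) \<longlonglongrightarrow> 0 \<and>
        (\<lambda>m. PN k (\<lambda>i. BA A k (xs m) i - y i)) \<longlonglongrightarrow> 0
      \<longrightarrow> x \<in> BD DA k \<and> BA A k x = y)"

definition block_spec :: "(nat \<Rightarrow> 'a::complex_normed_vector set) \<Rightarrow> (nat \<Rightarrow> nat \<Rightarrow> 'a set) \<Rightarrow> (nat \<Rightarrow> nat \<Rightarrow> 'a \<Rightarrow> 'a) \<Rightarrow> nat \<Rightarrow> complex set" where
  "block_spec X DA A k = {l. \<not> resolvent_ok (PS X k) (PN k) (BD DA k) (\<lambda>x i. scaleC l (x i) - BA A k x i)}"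

definition rowT :: "(nat \<Rightarrow> 'a \<Rightarrow> 'a::comm_monoid_add) \<Rightarrow> nat \<Rightarrow> (nat \<Rightarrow> 'a) \<Rightarrow> 'a" where
  "rowT T m x = (\<Sum>j=1..m. T j (x j))"

end

theory Submission
  imports Defs "HOL-Library.Function_Algebras"
begin
primrec iter_seq :: "('v \<Rightarrow> nat \<Rightarrow> 'v) \<Rightarrow> 'v \<Rightarrow> nat \<Rightarrow> 'v" where
  "iter_seq F z 0 = z"
| "iter_seq F z (Suc j) = F (iter_seq F z j) j"

lemma geom_half_sum:
  assumes "k \<le> m"
  shows "(\<Sum>i\<in>{k..<m}. (1/2::real)^i) = 2*(1/2)^k - 2*(1/2)^m"
  using assms
proof (induction m rule: dec_induct)
  case base then show ?case by simp
next
  case (step n) then show ?case by (simp add: sum.atLeastLessThan_Suc)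
qed

lemma baire_step:
  fixes D :: "'v::ab_group_add set" and N1 N2 :: "'v \<Rightarrow> real"
  assumes D0: "0 \<in> D" and Ddiff: "\<And>x y. x\<in>D \<Longrightarrow> y\<in>D \<Longrightarrow> x-y\<in>D"
    and Dadd: "\<And>x y. x\<in>D \<Longrightarrow> y\<in>D \<Longrightarrow> x+y\<in>D"
    and N1nn: "\<And>x. 0 \<le> N1 x"
    and N1tri: "\<And>x y. x\<in>D \<Longrightarrow> y\<in>D \<Longrightarrow> N1 (x+y) \<le> N1 x + N1 y"
    and N1sym: "\<And>x y. x\<in>D \<Longrightarrow> y\<in>D \<Longrightarrow> N1 (x-y) = N1 (y-x)"
    and N10: "N1 0 = 0"
    and N1def: "\<And>x. x\<in>D \<Longrightarrow> N1 x = 0 \<Longrightarrow> x = 0"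
    and comp1: "\<And>f. (\<forall>m. f m \<in> D) \<Longrightarrow> (\<forall>e>0. \<exists>M. \<forall>m k. M \<le> m \<longrightarrow> M \<le> k \<longrightarrow> N1 (f m - f k) < e)
                 \<Longrightarrow> \<exists>x\<in>D. (\<lambda>m. N1 (f m - x)) \<longlonglongrightarrow> 0"
  shows "\<exists>(j::nat) x0 r. x0 \<in> D \<and> r > 0 \<and>
     (\<forall>y\<in>D. N1 (x0 - y) < r \<longrightarrow> (\<forall>e>0. \<exists>w\<in>D. N2 w \<le> real j \<and> N1 (y - w) < e))"
proof -
  define d where "d x y = (if x\<in>D \<and> y\<in>D then N1 (x-y) else 0)" for x y
  have ms: "Metric_space D d"
  proof
    show "0 \<le> d x y" for x y by (simp add: d_def N1nn)
    show "d x y = d y x" for x y by (simp add: d_def N1sym)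
    show "d x y = 0 \<longleftrightarrow> x = y" if "x\<in>D" "y\<in>D" for x y
      using that N1def[of "x-y"] Ddiff[of x y] by (auto simp: d_def N10)
    show "d x z \<le> d x y + d y z" if "x\<in>D" "y\<in>D" "z\<in>D" for x y z
    proof -
      have "x - z = (x-y) + (y-z)" by simp
      then show ?thesis using that N1tri[of "x-y" "y-z"] Ddiff by (simp add: d_def)
    qed
  qed
  interpret M: Metric_space D d by (rule ms)
  have mc: "M.mcomplete"
    unfolding M.mcomplete_def
  proof (intro allI impI)
    fix \<sigma> assume "M.MCauchy \<sigma>"
    then have rs: "\<forall>m. \<sigma> m \<in> D" and C: "\<forall>e>0. \<exists>N. \<forall>n n'. N \<le> n \<longrightarrow> N \<le> n' \<longrightarrow> d (\<sigma> n) (\<sigma> n') < e"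
      unfolding M.MCauchy_def by auto
    have "\<forall>e>0. \<exists>M. \<forall>m k. M \<le> m \<longrightarrow> M \<le> k \<longrightarrow> N1 (\<sigma> m - \<sigma> k) < e"
      using C rs by (simp add: d_def)
    then obtain x where x: "x\<in>D" "(\<lambda>m. N1 (\<sigma> m - x)) \<longlonglongrightarrow> 0" using comp1 rs by blast
    have "limitin M.mtopology \<sigma> x sequentially"
      unfolding M.limitin_metric
    proof (intro conjI allI impI)
      show "x \<in> D" by fact
      fix e :: real assume "e > 0"
      then have "eventually (\<lambda>m. N1 (\<sigma> m - x) < e) sequentially"
        using x(2) by (rule order_tendstoD(2)[rotated])
      then show "eventually (\<lambda>m. \<sigma> m \<in> D \<and> d (\<sigma> m) x < e) sequentially"
        by eventually_elim (use rs x in \<open>auto simp: d_def\<close>)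
    qed
    then show "\<exists>x. limitin M.mtopology \<sigma> x sequentially" by blast
  qed
  define G where "G j = M.mtopology closure_of {x\<in>D. N2 x \<le> real j}" for j :: nat
  have UG: "\<Union>(range G) = D"
  proof
    show "\<Union>(range G) \<subseteq> D" unfolding G_def using closure_of_subset_topspace by fastforce
    show "D \<subseteq> \<Union>(range G)"
    proof
      fix x assume x: "x \<in> D"
      have "N2 x \<le> real (nat \<lceil>N2 x\<rceil>)" by linarith
      then have "x \<in> G (nat \<lceil>N2 x\<rceil>)" unfolding G_def
        using closure_of_subset_Int[of M.mtopology "{v\<in>D. N2 v \<le> real (nat \<lceil>N2 x\<rceil>)}"] x by (auto simp: M.topspace_mtopology)
      then show "x \<in> \<Union>(range G)" by blast
    qed
  qed
  have "\<exists>j. M.mtopology interior_of G j \<noteq> {}"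
  proof (rule ccontr)
    assume "\<not> ?thesis"
    then have "M.mtopology interior_of \<Union>(range G) = {}"
      by (intro M.metric_Baire_category_alt[OF mc]) (auto simp: G_def)
    then show False using UG D0 interior_of_topspace[of M.mtopology] by simp
  qed
  then obtain j x0 where "x0 \<in> M.mtopology interior_of G j" by blast
  then obtain T where T: "openin M.mtopology T" "x0 \<in> T" "T \<subseteq> G j" unfolding interior_of_def by blast
  then obtain r where r: "r > 0" "M.mball x0 r \<subseteq> T" using M.openin_mtopology by blast
  have x0D: "x0 \<in> D" using T M.openin_mtopology by blast
  show ?thesis
  proof (intro exI conjI ballI impI allI)
    show "x0 \<in> D" "r > 0" by fact+
    fix y e assume y: "y \<in> D" "N1 (x0 - y) < r" and e: "(e::real) > 0"
    then have "y \<in> M.mball x0 r" using x0D by (simp add: d_def)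
    then have "y \<in> G j" using r T by blast
    then obtain w where "w \<in> {x\<in>D. N2 x \<le> real j}" "w \<in> M.mball y e"
      unfolding G_def M.metric_closure_of using e by blast
    then show "\<exists>w\<in>D. N2 w \<le> real j \<and> N1 (y - w) < e" using y by (auto simp: d_def)
  qed
qed

lemma two_norm:
  fixes D :: "'v::ab_group_add set" and sc :: "real \<Rightarrow> 'v \<Rightarrow> 'v" and N1 N2 :: "'v \<Rightarrow> real"
  assumes D0: "0 \<in> D" and Ddiff: "\<And>x y. x\<in>D \<Longrightarrow> y\<in>D \<Longrightarrow> x-y\<in>D"
    and Dadd: "\<And>x y. x\<in>D \<Longrightarrow> y\<in>D \<Longrightarrow> x+y\<in>D"
    and Dsc: "\<And>c x. x\<in>D \<Longrightarrow> sc c x \<in> D"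
    and sc_sc: "\<And>a b x. x\<in>D \<Longrightarrow> sc a (sc b x) = sc (a*b) x"
    and sc_one: "\<And>x. x\<in>D \<Longrightarrow> sc 1 x = x"
    and sc_diff: "\<And>a x y. x\<in>D \<Longrightarrow> y\<in>D \<Longrightarrow> sc a (x-y) = sc a x - sc a y"
    and N1nn: "\<And>x. 0 \<le> N1 x"
    and N1tri: "\<And>x y. x\<in>D \<Longrightarrow> y\<in>D \<Longrightarrow> N1 (x+y) \<le> N1 x + N1 y"
    and N1sym: "\<And>x y. x\<in>D \<Longrightarrow> y\<in>D \<Longrightarrow> N1 (x-y) = N1 (y-x)"
    and N1sc: "\<And>c x. x\<in>D \<Longrightarrow> N1 (sc c x) = \<bar>c\<bar> * N1 x"
    and N10: "N1 0 = 0"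
    and N1def: "\<And>x. x\<in>D \<Longrightarrow> N1 x = 0 \<Longrightarrow> x = 0"
    and N2nn: "\<And>x. 0 \<le> N2 x"
    and N2tri: "\<And>x y. x\<in>D \<Longrightarrow> y\<in>D \<Longrightarrow> N2 (x+y) \<le> N2 x + N2 y"
    and N2sym: "\<And>x y. x\<in>D \<Longrightarrow> y\<in>D \<Longrightarrow> N2 (x-y) = N2 (y-x)"
    and N2sc: "\<And>c x. x\<in>D \<Longrightarrow> N2 (sc c x) = \<bar>c\<bar> * N2 x"
    and N20: "N2 0 = 0"
    and dom: "\<And>x. x\<in>D \<Longrightarrow> N1 x \<le> C * N2 x"
    and comp1: "\<And>f. (\<forall>m. f m \<in> D) \<Longrightarrow> (\<forall>e>0. \<exists>M. \<forall>m k. M \<le> m \<longrightarrow> M \<le> k \<longrightarrow> N1 (f m - f k) < e)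
                 \<Longrightarrow> \<exists>x\<in>D. (\<lambda>m. N1 (f m - x)) \<longlonglongrightarrow> 0"
    and comp2: "\<And>f. (\<forall>m. f m \<in> D) \<Longrightarrow> (\<forall>e>0. \<exists>M. \<forall>m k. M \<le> m \<longrightarrow> M \<le> k \<longrightarrow> N2 (f m - f k) < e)
                 \<Longrightarrow> \<exists>x\<in>D. (\<lambda>m. N2 (f m - x)) \<longlonglongrightarrow> 0"
  shows "\<exists>K. \<forall>x\<in>D. N2 x \<le> K * N1 x"
proof -
  have N1d: "N1 (a - b) \<le> N1 a + N1 b" if "a\<in>D" "b\<in>D" for a b
  proof -
    have "N1 (a - b) = N1 (a + (0 - b))" by simp
    also have "\<dots> \<le> N1 a + N1 (0 - b)" using that D0 Ddiff[of 0 b] by (intro N1tri) auto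
    also have "N1 (0 - b) = N1 b" using N1sym[of 0 b] that D0 by simp
    finally show ?thesis .
  qed
  have N2d: "N2 (a - b) \<le> N2 a + N2 b" if "a\<in>D" "b\<in>D" for a b
  proof -
    have "N2 (a - b) = N2 (a + (0 - b))" by simp
    also have "\<dots> \<le> N2 a + N2 (0 - b)" using that D0 Ddiff[of 0 b] by (intro N2tri) auto
    also have "N2 (0 - b) = N2 b" using N2sym[of 0 b] that D0 by simp
    finally show ?thesis .
  qed
  obtain j x0 r where x0: "x0 \<in> D" and r: "r > 0" and
    B: "\<And>y e. y\<in>D \<Longrightarrow> N1 (x0 - y) < r \<Longrightarrow> e > 0 \<Longrightarrow> \<exists>w\<in>D. N2 w \<le> real j \<and> N1 (y - w) < e"
    using baire_step[of D N1 N2, OF D0 Ddiff Dadd N1nn N1tri N1sym N10 N1def comp1] by blast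
  have B2: "\<exists>w\<in>D. N2 w \<le> 2 * real j \<and> N1 (z - w) < e" if z: "z\<in>D" "N1 z < r" and e: "e > 0" for z e
  proof -
    have "N1 (x0 - (x0 - z)) < r" using z by simp
    then obtain w1 where w1: "w1\<in>D" "N2 w1 \<le> real j" "N1 ((x0 - z) - w1) < e/2"
      using B[of "x0 - z" "e/2"] x0 z e Ddiff by auto
    obtain w2 where w2: "w2\<in>D" "N2 w2 \<le> real j" "N1 (x0 - w2) < e/2"
      using B[of x0 "e/2"] x0 e r N10 by auto
    have eq: "z - (w2 - w1) = (x0 - w2) - ((x0 - z) - w1)" by (simp add: algebra_simps)
    have "N1 (z - (w2 - w1)) \<le> N1 (x0 - w2) + N1 ((x0 - z) - w1)"
      unfolding eq by (rule N1d) (use x0 z w1 w2 Ddiff in auto)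
    moreover have "N2 (w2 - w1) \<le> 2 * real j" using N2d[of w2 w1] w1 w2 by simp
    ultimately show ?thesis using w1 w2 Ddiff by (intro bexI[of _ "w2 - w1"]) auto
  qed
  define K0 where "K0 = 4 * real j / r"
  have K0: "K0 \<ge> 0" using r by (simp add: K0_def)
  have B3: "\<exists>w\<in>D. N2 w \<le> K0 * N1 z \<and> N1 (z - w) < e" if z: "z\<in>D" and e: "e > 0" for z e
  proof (cases "N1 z = 0")
    case True
    then have "z = 0" using N1def z by blast
    then show ?thesis using D0 N10 N20 e by (intro bexI[of _ 0]) auto
  next
    case False
    then have pz: "N1 z > 0" using N1nn[of z] by linarith
    define t where "t = r / (2 * N1 z)"
    have t: "t > 0" using r pz by (simp add: t_def)
    have "N1 (sc t z) = r/2" using N1sc[OF z, of t] t pz r by (simp add: t_def)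
    then have "N1 (sc t z) < r" using r by simp
    then obtain w' where w': "w'\<in>D" "N2 w' \<le> 2 * real j" "N1 (sc t z - w') < e * t"
      using B2[of "sc t z" "e*t"] Dsc z e t by auto
    have zz: "sc (1/t) (sc t z) = z" using sc_sc[OF z] sc_one[OF z] t by simp
    have "N1 (z - sc (1/t) w') = N1 (sc (1/t) (sc t z - w'))"
      using sc_diff[of "sc t z" w' "1/t"] Dsc z w' zz by simp
    also have "\<dots> = (1/t) * N1 (sc t z - w')" using N1sc Ddiff Dsc z w' t by simp
    also have "\<dots> < (1/t) * (e * t)" using w' t by (intro mult_strict_left_mono) auto
    also have "\<dots> = e" using t by simp
    finally have 1: "N1 (z - sc (1/t) w') < e" .
    have "N2 (sc (1/t) w') = (1/t) * N2 w'" using N2sc w' t by simp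
    also have "\<dots> \<le> (1/t) * (2 * real j)" using w' t by (intro mult_left_mono) auto
    also have "\<dots> = K0 * N1 z" using t pz r by (simp add: t_def K0_def field_simps)
    finally show ?thesis using 1 Dsc w' by blast
  qed
  obtain W where W: "\<And>u e. u\<in>D \<Longrightarrow> e > 0 \<Longrightarrow> W u e \<in> D \<and> N2 (W u e) \<le> K0 * N1 u \<and> N1 (u - W u e) < e"
  proof -
    have "\<forall>u e. \<exists>w. u\<in>D \<and> e > 0 \<longrightarrow> w \<in> D \<and> N2 w \<le> K0 * N1 u \<and> N1 (u - w) < e"
      using B3 by blast
    then obtain W where "\<forall>u e. u\<in>D \<and> e > 0 \<longrightarrow> W u e \<in> D \<and> N2 (W u e) \<le> K0 * N1 u \<and> N1 (u - W u e) < e"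
      by metis
    then show ?thesis using that by blast
  qed
  have main: "N2 z \<le> (2*K0) * N1 z" if z: "z \<in> D" for z
  proof (cases "N1 z = 0")
    case True
    then have "z = 0" using N1def z by blast
    then show ?thesis using N20 N10 by simp
  next
    case False
    then have pz: "N1 z > 0" using N1nn[of z] by linarith
    define eps where "eps i = N1 z * (1/2)^(Suc i)" for i :: nat
    have eps: "eps i > 0" for i using pz by (simp add: eps_def)
    define zs where "zs = iter_seq (\<lambda>u i. u - W u (eps i)) z"
    have zs0: "zs 0 = z" and zsS: "zs (Suc i) = zs i - W (zs i) (eps i)" for i
      by (simp_all add: zs_def)
    have zsD: "zs i \<in> D \<and> N1 (zs i) \<le> N1 z * (1/2)^i" for i
    proof (induction i)
      case 0 then show ?case using z zs0 by simp
    next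
      case (Suc i)
      then have "W (zs i) (eps i) \<in> D" "N1 (zs i - W (zs i) (eps i)) < eps i" using W eps by blast+
      then show ?case using Suc Ddiff zsS[of i] by (simp add: eps_def less_imp_le)
    qed
    define ws where "ws i = W (zs i) (eps i)" for i
    have wsD: "ws i \<in> D" for i using W zsD eps by (simp add: ws_def)
    have wsN: "N2 (ws i) \<le> K0 * N1 z * (1/2)^i" for i
    proof -
      have "N2 (ws i) \<le> K0 * N1 (zs i)" using W zsD eps by (simp add: ws_def)
      also have "\<dots> \<le> K0 * (N1 z * (1/2)^i)" using zsD K0 by (intro mult_left_mono) auto
      finally show ?thesis by simp
    qed
    define S where "S m = (\<Sum>i<m. ws i)" for m
    have sumD: "(\<Sum>i\<in>I. ws i) \<in> D \<and> N2 (\<Sum>i\<in>I. ws i) \<le> (\<Sum>i\<in>I. N2 (ws i))" if "finite I" for I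
      using that
    proof (induction I rule: finite_induct)
      case empty then show ?case using D0 N20 by simp
    next
      case (insert i I)
      then show ?case using Dadd wsD N2tri[of "ws i" "\<Sum>i\<in>I. ws i"] by simp
    qed
    have SD: "S m \<in> D" for m using sumD[of "{..<m}"] by (simp add: S_def)
    have Szs: "S m = z - zs m" for m
      proof (induction m)
      case 0 then show ?case by (simp add: S_def zs0)
    next
      case (Suc m)
      have "S (Suc m) = S m + ws m" by (simp add: S_def)
      also have "\<dots> = z - zs m + ws m" using Suc by simp
      also have "\<dots> = z - zs (Suc m)" unfolding zsS ws_def by (simp add: algebra_simps)
      finally show ?case .
    qed
    have Sdiff: "N2 (S m - S k) \<le> 2 * K0 * N1 z * (1/2)^k" if "k \<le> m" for m k
    proof -
      have "S m = (\<Sum>i\<in>{0..<k}. ws i) + (\<Sum>i\<in>{k..<m}. ws i)"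
        unfolding S_def lessThan_atLeast0 using sum.atLeastLessThan_concat[of 0 k m ws] that by simp
      then have "S m - S k = (\<Sum>i\<in>{k..<m}. ws i)"
        by (simp add: S_def lessThan_atLeast0)
      then have "N2 (S m - S k) \<le> (\<Sum>i\<in>{k..<m}. N2 (ws i))" using sumD[of "{k..<m}"] by simp
      also have "\<dots> \<le> (\<Sum>i\<in>{k..<m}. K0 * N1 z * (1/2)^i)" by (intro sum_mono wsN)
      also have "\<dots> = K0 * N1 z * (\<Sum>i\<in>{k..<m}. (1/2::real)^i)" by (simp add: sum_distrib_left)
      also have "\<dots> = K0 * N1 z * (2*(1/2)^k - 2*(1/2)^m)" using geom_half_sum[OF that] by simp
      also have "\<dots> \<le> K0 * N1 z * (2*(1/2)^k)" using K0 pz by (intro mult_left_mono) auto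
      finally show ?thesis by simp
    qed
    have "\<exists>w\<in>D. (\<lambda>m. N2 (S m - w)) \<longlonglongrightarrow> 0"
    proof (rule comp2)
      show "\<forall>m. S m \<in> D" using SD by blast
      show "\<forall>e>0. \<exists>M. \<forall>m k. M \<le> m \<longrightarrow> M \<le> k \<longrightarrow> N2 (S m - S k) < e"
      proof (intro allI impI)
        fix e :: real assume e: "e > 0"
        have KN: "0 \<le> 2 * K0 * N1 z" using K0 pz by (intro mult_nonneg_nonneg) auto
        have "0 < e / (2 * K0 * N1 z + 1)" using e KN by (intro divide_pos_pos) auto
        then obtain M where M: "(1/2::real)^M < e / (2 * K0 * N1 z + 1)"
          using real_arch_pow_inv[of "e / (2 * K0 * N1 z + 1)" "1/2::real"] by auto
        have MM: "2 * K0 * N1 z * (1/2::real)^M < e"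
        proof -
          have "2 * K0 * N1 z * (1/2::real)^M \<le> (2 * K0 * N1 z + 1) * (1/2)^M"
            by (intro mult_right_mono) auto
          also have "\<dots> < (2 * K0 * N1 z + 1) * (e / (2 * K0 * N1 z + 1))"
            using M KN by (intro mult_strict_left_mono) auto
          also have "\<dots> = e" using KN by simp
          finally show ?thesis .
        qed
        have bnd: "N2 (S m - S k) < e" if "M \<le> m" "M \<le> k" "k \<le> m" for m k
        proof -
          have "N2 (S m - S k) \<le> 2 * K0 * N1 z * (1/2)^k" by (rule Sdiff) fact
          also have "\<dots> \<le> 2 * K0 * N1 z * (1/2)^M" using K0 pz that
            by (intro mult_left_mono power_decreasing) auto
          finally show ?thesis using MM by simp
        qed
        show "\<exists>M. \<forall>m k. M \<le> m \<longrightarrow> M \<le> k \<longrightarrow> N2 (S m - S k) < e"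
        proof (intro exI allI impI)
          fix m k assume "M \<le> m" "M \<le> k"
          show "N2 (S m - S k) < e"
          proof (cases "k \<le> m")
            case True then show ?thesis using bnd \<open>M \<le> m\<close> \<open>M \<le> k\<close> by blast
          next
            case False
            then have "N2 (S k - S m) < e" using bnd \<open>M \<le> m\<close> \<open>M \<le> k\<close> by simp
            then show ?thesis using N2sym[of "S k" "S m"] SD by simp
          qed
        qed
      qed
    qed
    then obtain w where w: "w \<in> D" "(\<lambda>m. N2 (S m - w)) \<longlonglongrightarrow> 0" by blast
    have "N2 w - 2 * K0 * N1 z \<le> 0"
    proof (rule LIMSEQ_le_const[OF w(2)])
      show "\<exists>N. \<forall>m\<ge>N. N2 w - 2 * K0 * N1 z \<le> N2 (S m - w)"
      proof (intro exI allI impI)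
        fix m :: nat
        have "w = S m - (S m - w)" by simp
        then have "N2 w \<le> N2 (S m) + N2 (S m - w)" using N2d[of "S m" "S m - w"] SD w Ddiff by simp
        moreover have "N2 (S m) \<le> 2 * K0 * N1 z"
          using Sdiff[of 0 m] by (simp add: S_def)
        ultimately show "N2 w - 2 * K0 * N1 z \<le> N2 (S m - w)" by linarith
      qed
    qed
    moreover have "z = w"
    proof -
      have lim: "(\<lambda>m. N1 z * (1/2)^m + C * N2 (S m - w)) \<longlonglongrightarrow> 0"
      proof -
        have "(\<lambda>m. N1 z * (1/2::real)^m) \<longlonglongrightarrow> N1 z * 0"
          by (intro tendsto_mult tendsto_const LIMSEQ_power_zero) simp
        moreover have "(\<lambda>m. C * N2 (S m - w)) \<longlonglongrightarrow> C * 0"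
          by (intro tendsto_mult tendsto_const w(2))
        ultimately show ?thesis using tendsto_add[of "\<lambda>m. N1 z * (1/2::real)^m" 0 sequentially "\<lambda>m. C * N2 (S m - w)" 0] by simp
      qed
      have "N1 (z - w) \<le> 0"
      proof (rule LIMSEQ_le_const[OF lim])
        show "\<exists>N. \<forall>m\<ge>N. N1 (z - w) \<le> N1 z * (1/2)^m + C * N2 (S m - w)"
        proof (intro exI allI impI)
          fix m :: nat
          have "z - w = (z - S m) + (S m - w)" by simp
          then have "N1 (z - w) \<le> N1 (z - S m) + N1 (S m - w)"
            using N1tri[of "z - S m" "S m - w"] z SD w Ddiff by simp
          moreover have "N1 (z - S m) = N1 (zs m)" using Szs by simp
          moreover have "N1 (S m - w) \<le> C * N2 (S m - w)" using dom Ddiff SD w by blast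
          ultimately show "N1 (z - w) \<le> N1 z * (1/2)^m + C * N2 (S m - w)" using zsD[of m] by linarith
        qed
      qed
      then have "N1 (z - w) = 0" using N1nn[of "z - w"] by linarith
      then have "z - w = 0" using N1def Ddiff z w by blast
      then show ?thesis by simp
    qed
    ultimately show ?thesis by simp
  qed
  then show ?thesis by blast
qed


lemma csub_props:
  fixes S :: "'a::complex_normed_vector set"
  assumes "csubspace S"
  shows "0 \<in> S" "\<And>x y. x\<in>S \<Longrightarrow> y\<in>S \<Longrightarrow> x + y \<in> S" "\<And>x c. x\<in>S \<Longrightarrow> scaleR c x \<in> S"
    "\<And>x y. x\<in>S \<Longrightarrow> y\<in>S \<Longrightarrow> x - y \<in> S"
proof -
  show 0: "0 \<in> S" using assms by (simp add: csubspace_def)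
  show add: "\<And>x y. x\<in>S \<Longrightarrow> y\<in>S \<Longrightarrow> x + y \<in> S" using assms by (simp add: csubspace_def)
  show sc: "\<And>x c. x\<in>S \<Longrightarrow> scaleR c x \<in> S"
    using assms scaleC_of_real by (metis csubspace_def)
  show "\<And>x y. x\<in>S \<Longrightarrow> y\<in>S \<Longrightarrow> x - y \<in> S"
  proof -
    fix x y assume "x\<in>S" "y\<in>S"
    then have "x + scaleR (-1) y \<in> S" using add sc by blast
    then show "x - y \<in> S" by simp
  qed
qed

lemma csub_sum:
  fixes S :: "'a::complex_normed_vector set"
  assumes "csubspace S" "finite I" "\<And>i. i\<in>I \<Longrightarrow> f i \<in> S"
  shows "(\<Sum>i\<in>I. f i) \<in> S"
  using assms(2,3)
proof (induction I rule: finite_induct)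
  case empty then show ?case using csub_props(1)[OF assms(1)] by simp
next
  case (insert i I) then show ?case using csub_props(2)[OF assms(1)] by simp
qed

lemma lin_op_props:
  fixes f :: "'a::complex_normed_vector \<Rightarrow> 'a"
  assumes L: "lin_op Y Z Dm f"
  shows "csubspace Dm" "Dm \<subseteq> Y" "\<And>x. x\<in>Dm \<Longrightarrow> f x \<in> Z"
    "\<And>x y. x\<in>Dm \<Longrightarrow> y\<in>Dm \<Longrightarrow> f (x + y) = f x + f y"
    "\<And>x c. x\<in>Dm \<Longrightarrow> f (scaleR c x) = scaleR c (f x)"
    "\<And>x y. x\<in>Dm \<Longrightarrow> y\<in>Dm \<Longrightarrow> f (x - y) = f x - f y"
    "f 0 = 0"
proof -
  show cs: "csubspace Dm" "Dm \<subseteq> Y" "\<And>x. x\<in>Dm \<Longrightarrow> f x \<in> Z" using L by (auto simp: lin_op_def)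
  show add: "\<And>x y. x\<in>Dm \<Longrightarrow> y\<in>Dm \<Longrightarrow> f (x + y) = f x + f y" using L by (simp add: lin_op_def)
  show sc: "\<And>x c. x\<in>Dm \<Longrightarrow> f (scaleR c x) = scaleR c (f x)"
    using L scaleC_of_real unfolding lin_op_def by metis
  show "\<And>x y. x\<in>Dm \<Longrightarrow> y\<in>Dm \<Longrightarrow> f (x - y) = f x - f y"
  proof -
    fix x y assume xy: "x\<in>Dm" "y\<in>Dm"
    have "f (x - y) = f (x + scaleR (-1) y)" by simp
    also have "\<dots> = f x + f (scaleR (-1) y)" using add xy csub_props(3)[OF cs(1)] by blast
    also have "f (scaleR (-1) y) = scaleR (-1) (f y)" using sc xy by blast
    finally show "f (x - y) = f x - f y" by simp
  qed
  have "f (scaleR 0 0) = scaleR 0 (f 0)" using sc csub_props(1)[OF cs(1)] by blast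
  then show "f 0 = 0" by simp
qed

lemma uniform_bound:
  assumes "finite S"
    and "\<forall>p\<in>S. \<exists>a b. a \<ge> 0 \<and> b \<ge> 0 \<and> (\<forall>x\<in>Dm p. F p x \<le> a * G p x + b * H p x)"
    and "\<And>p x. G p x \<ge> 0" "\<And>p x. H p x \<ge> (0::real)"
  shows "\<exists>a b. a \<ge> 0 \<and> b \<ge> 0 \<and> (\<forall>p\<in>S. \<forall>x\<in>Dm p. F p x \<le> a * G p x + b * H p x)"
  using assms(1,2)
proof (induction S rule: finite_induct)
  case empty then show ?case by auto
next
  case (insert q S)
  then obtain a b where ab: "a \<ge> 0" "b \<ge> 0" "\<forall>p\<in>S. \<forall>x\<in>Dm p. F p x \<le> a * G p x + b * H p x" by auto
  obtain a' b' where ab': "a' \<ge> 0" "b' \<ge> 0" "\<forall>x\<in>Dm q. F q x \<le> a' * G q x + b' * H q x"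
    using insert.prems by auto
  show ?case
  proof (intro exI conjI ballI)
    show "max a a' \<ge> 0" "max b b' \<ge> 0" using ab by auto
    fix p x assume p: "p \<in> insert q S" and x: "x \<in> Dm p"
    have mono: "a1 * G p x + b1 * H p x \<le> max a a' * G p x + max b b' * H p x"
      if "a1 \<le> max a a'" "b1 \<le> max b b'" for a1 b1
      using that assms(3,4)[of p x] by (intro add_mono mult_right_mono) auto
    show "F p x \<le> max a a' * G p x + max b b' * H p x"
    proof (cases "p = q")
      case True
      then show ?thesis using ab'(3) x mono[of a' b'] by force
    next
      case False
      then show ?thesis using ab(3) p x mono[of a b] by force
    qed
  qed
qed

lemma cauchy_lim:
  fixes u :: "nat \<Rightarrow> 'a::banach"
  assumes "\<forall>e>0. \<exists>M. \<forall>m k. M \<le> m \<longrightarrow> M \<le> k \<longrightarrow> norm (u m - u k) < e"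
  shows "\<exists>L. u \<longlonglongrightarrow> L"
proof -
  have "Cauchy u" unfolding Cauchy_def dist_norm using assms by blast
  then show ?thesis using Cauchy_convergent_iff convergent_def by blast
qed

lemma cauchy_comp:
  fixes u :: "nat \<Rightarrow> 'a::banach"
  assumes "\<forall>e>0. \<exists>M. \<forall>m k. M \<le> m \<longrightarrow> M \<le> k \<longrightarrow> N (f m - f k) < e"
    and "\<And>m k. norm (u m - u k) \<le> N (f m - f k)"
  shows "\<exists>L. u \<longlonglongrightarrow> L"
proof (rule cauchy_lim, intro allI impI)
  fix e :: real assume "e > 0"
  then obtain M where "\<forall>m k. M \<le> m \<longrightarrow> M \<le> k \<longrightarrow> N (f m - f k) < e" using assms(1) by blast
  then have "\<forall>m k. M \<le> m \<longrightarrow> M \<le> k \<longrightarrow> norm (u m - u k) < e"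
    using assms(2) by (meson le_less_trans)
  then show "\<exists>M. \<forall>m k. M \<le> m \<longrightarrow> M \<le> k \<longrightarrow> norm (u m - u k) < e" by blast
qed

lemma PN_comp: "i \<in> {1..k} \<Longrightarrow> norm (x i) \<le> PN k x"
  unfolding PN_def by (rule member_le_sum) auto

lemma PN_nn: "0 \<le> PN k x" unfolding PN_def by (simp add: sum_nonneg)

lemma PN_tendsto:
  fixes f :: "nat \<Rightarrow> nat \<Rightarrow> 'a::real_normed_vector"
  assumes "\<And>i. i \<in> {1..k} \<Longrightarrow> (\<lambda>m. f m i) \<longlonglongrightarrow> x i"
  shows "(\<lambda>m. PN k (\<lambda>i. f m i - x i)) \<longlonglongrightarrow> 0"
proof -
  have "(\<lambda>m. \<Sum>i=1..k. norm (f m i - x i)) \<longlonglongrightarrow> (\<Sum>i=1..k. 0)"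
  proof (rule tendsto_sum)
    fix i assume "i \<in> {1..k}"
    then have "(\<lambda>m. f m i - x i) \<longlonglongrightarrow> 0" using assms LIM_zero by blast
    then show "(\<lambda>m. norm (f m i - x i)) \<longlonglongrightarrow> 0" by (rule tendsto_norm_zero)
  qed
  then show ?thesis by (simp add: PN_def)
qed

lemma closed_graph_lim:
  assumes "closed_op Dm f" "\<And>m. u m \<in> Dm" "u \<longlonglongrightarrow> a" "(\<lambda>m. f (u m)) \<longlonglongrightarrow> b"
  shows "a \<in> Dm \<and> f a = b"
proof -
  define G where "G = {(x, f x) | x. x \<in> Dm}"
  have cl: "closed G" using assms(1) by (simp add: closed_op_def G_def)
  have cv: "(\<lambda>m. (u m, f (u m))) \<longlonglongrightarrow> (a, b)" using assms(3,4) by (rule tendsto_Pair)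
  have mem: "\<And>m. (u m, f (u m)) \<in> G" using assms(2) by (auto simp: G_def)
  have "(a, b) \<in> G" by (rule closed_sequentially[OF cl mem cv])
  then show ?thesis by (auto simp: G_def)
qed
lemma PN_add: "PN k (x + y) \<le> PN k x + PN k y"
  unfolding PN_def by (simp add: sum.distrib[symmetric] sum_mono norm_triangle_ineq)

lemma PN_sym: "PN k (x - y) = PN k (y - x)"
  unfolding PN_def by (simp add: norm_minus_commute)

lemma PN_sc: "PN k (\<lambda>i. c *\<^sub>R x i) = \<bar>c\<bar> * PN k x"
  unfolding PN_def by (simp add: sum_distrib_left)

lemma PN_zero: "PN k 0 = 0" unfolding PN_def by simp

lemma core:
  fixes X :: "nat \<Rightarrow> 'a::{complex_normed_vector,banach} set"
    and A :: "nat \<Rightarrow> nat \<Rightarrow> 'a \<Rightarrow> 'a" and DA :: "nat \<Rightarrow> nat \<Rightarrow> 'a set" and k :: nat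
  assumes Xb: "\<forall>i\<in>{1..k}. banach_subspace (X i)"
    and Alin: "\<forall>i\<in>{1..k}. \<forall>j\<in>{1..k}. lin_op (X j) (X i) (DA i j) (A i j)"
    and Aclosed: "\<forall>i\<in>{1..k}. closed_op (DA i i) (A i i)"
    and Arel: "\<forall>i\<in>{1..k}. \<forall>j\<in>{1..k}. i \<noteq> j \<longrightarrow>
                 rel_bounded_gen norm norm (DA i j) (A i j) (DA j j) (A j j)"
    and Bc: "block_closed X DA A k"
  shows "\<exists>K. \<forall>x\<in>BD DA k. PN k x + (\<Sum>i=1..k. norm (A i i (x i))) \<le> K * (PN k x + PN k (BA A k x))"
proof -
  define D where "D = BD DA k"
  have Dmem: "x \<in> D \<longleftrightarrow> (\<forall>i. (i\<in>{1..k} \<longrightarrow> x i \<in> DA i i) \<and> (i\<notin>{1..k} \<longrightarrow> x i = 0))" for x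
    by (simp add: D_def BD_def PS_def)
  have LA: "lin_op (X j) (X i) (DA i j) (A i j)" if "i\<in>{1..k}" "j\<in>{1..k}" for i j
    using Alin that by blast
  have sub: "DA j j \<subseteq> DA i j" if "i\<in>{1..k}" "j\<in>{1..k}" for i j
  proof (cases "i = j")
    case False then show ?thesis using Arel that by (auto simp: rel_bounded_gen_def)
  qed simp
  have xin: "x j \<in> DA i j" if "x \<in> D" "i\<in>{1..k}" "j\<in>{1..k}" for x i j
    using Dmem sub that by blast
  have xout: "x i = 0" if "x \<in> D" "i \<notin> {1..k}" for x i using Dmem that by blast
  have csD: "csubspace (DA i i)" if "i\<in>{1..k}" for i using lin_op_props(1)[OF LA[OF that that]] .
  define sc :: "real \<Rightarrow> (nat \<Rightarrow> 'a) \<Rightarrow> nat \<Rightarrow> 'a" where "sc c x = (\<lambda>i. c *\<^sub>R x i)" for c x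
  define N1 where "N1 x = PN k x + PN k (BA A k x)" for x
  define N2 where "N2 x = PN k x + (\<Sum>i=1..k. norm (A i i (x i)))" for x
  have D0: "0 \<in> D" unfolding Dmem using csub_props(1)[OF csD] by simp
  have Dadd: "x + y \<in> D" if "x\<in>D" "y\<in>D" for x y
    using that csub_props(2)[OF csD] unfolding Dmem by simp
  have Ddiff: "x - y \<in> D" if "x\<in>D" "y\<in>D" for x y
    using that csub_props(4)[OF csD] unfolding Dmem by simp
  have Dsc: "sc c x \<in> D" if "x\<in>D" for c x
    using that csub_props(3)[OF csD] unfolding Dmem sc_def by simp
  have BAadd: "BA A k (x + y) = BA A k x + BA A k y" if "x\<in>D" "y\<in>D" for x y
  proof
    fix i show "BA A k (x + y) i = (BA A k x + BA A k y) i"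
      using lin_op_props(4)[OF LA] xin that by (simp add: BA_def sum.distrib[symmetric])
  qed
  have BAdiff: "BA A k (x - y) = BA A k x - BA A k y" if "x\<in>D" "y\<in>D" for x y
  proof
    fix i show "BA A k (x - y) i = (BA A k x - BA A k y) i"
      using lin_op_props(6)[OF LA] xin that by (simp add: BA_def sum_subtractf[symmetric])
  qed
  have BAsc: "BA A k (sc c x) = sc c (BA A k x)" if "x\<in>D" for c x
  proof
    fix i show "BA A k (sc c x) i = sc c (BA A k x) i"
      using lin_op_props(5)[OF LA] xin that by (simp add: BA_def sc_def scaleR_sum_right)
  qed
  have BA0: "BA A k 0 = 0"
  proof
    fix i show "BA A k 0 i = 0 i" using lin_op_props(7)[OF LA] by (simp add: BA_def)
  qed
  have Aii_add: "A i i ((x + y) i) = A i i (x i) + A i i (y i)" if "x\<in>D" "y\<in>D" "i\<in>{1..k}" for x y i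
    using lin_op_props(4)[OF LA[OF that(3) that(3)]] xin that by simp
  have Aii_diff: "A i i ((x - y) i) = A i i (x i) - A i i (y i)" if "x\<in>D" "y\<in>D" "i\<in>{1..k}" for x y i
    using lin_op_props(6)[OF LA[OF that(3) that(3)]] xin that by simp
  have Aii_sc: "A i i (sc c x i) = c *\<^sub>R A i i (x i)" if "x\<in>D" "i\<in>{1..k}" for x c i
    using lin_op_props(5)[OF LA[OF that(2) that(2)]] xin that by (simp add: sc_def)
  obtain a b where ab: "a \<ge> 0" "b \<ge> 0"
    "\<forall>p\<in>{1..k}\<times>{1..k}. \<forall>v\<in>DA (snd p) (snd p). norm (A (fst p) (snd p) v) \<le> a * norm v + b * norm (A (snd p) (snd p) v)"
  proof -
    have "\<forall>p\<in>{1..k}\<times>{1..k}. \<exists>a b. a \<ge> 0 \<and> b \<ge> 0 \<and>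
      (\<forall>v\<in>DA (snd p) (snd p). norm (A (fst p) (snd p) v) \<le> a * norm v + b * norm (A (snd p) (snd p) v))"
    proof
      fix p assume p: "p \<in> {1..k}\<times>{1..k}"
      obtain i j where ij: "p = (i, j)" by (cases p)
      show "\<exists>a b. a \<ge> 0 \<and> b \<ge> 0 \<and>
        (\<forall>v\<in>DA (snd p) (snd p). norm (A (fst p) (snd p) v) \<le> a * norm v + b * norm (A (snd p) (snd p) v))"
      proof (cases "i = j")
        case True
        then show ?thesis using ij by (intro exI[of _ 0] exI[of _ 1]) auto
      next
        case False
        then show ?thesis using Arel p ij by (auto simp: rel_bounded_gen_def)
      qed
    qed
    then show ?thesis using that uniform_bound[of "{1..k}\<times>{1..k}" "\<lambda>p. DA (snd p) (snd p)"
      "\<lambda>p v. norm (A (fst p) (snd p) v)" "\<lambda>p v. norm v" "\<lambda>p v. norm (A (snd p) (snd p) v)"] by auto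
  qed
  define C where "C = 1 + real k * a + real k * b"
  have dom: "N1 x \<le> C * N2 x" if x: "x\<in>D" for x
  proof -
    define S2 where "S2 = (\<Sum>j=1..k. norm (A j j (x j)))"
    have S2: "S2 \<ge> 0" by (simp add: S2_def sum_nonneg)
    have P: "PN k x \<ge> 0" by (rule PN_nn)
    have "PN k (BA A k x) \<le> (\<Sum>i=1..k. \<Sum>j=1..k. a * norm (x j) + b * norm (A j j (x j)))"
      unfolding PN_def
    proof (rule sum_mono)
      fix i assume i: "i \<in> {1..k}"
      have "norm (BA A k x i) = norm (\<Sum>j=1..k. A i j (x j))" using i by (simp add: BA_def)
      also have "\<dots> \<le> (\<Sum>j=1..k. norm (A i j (x j)))" by (rule norm_sum)
      also have "\<dots> \<le> (\<Sum>j=1..k. a * norm (x j) + b * norm (A j j (x j)))"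
      proof (rule sum_mono)
        fix j assume j: "j \<in> {1..k}"
        then have "x j \<in> DA j j" using xin x by blast
        then show "norm (A i j (x j)) \<le> a * norm (x j) + b * norm (A j j (x j))"
          using ab(3) i j by force
      qed
      finally show "norm (BA A k x i) \<le> (\<Sum>j=1..k. a * norm (x j) + b * norm (A j j (x j)))" .
    qed
    also have "\<dots> = real k * (a * PN k x + b * S2)"
      by (simp add: PN_def S2_def sum.distrib sum_distrib_left)
    finally have 1: "PN k (BA A k x) \<le> real k * (a * PN k x + b * S2)" .
    have 2: "0 \<le> real k * a * S2" "0 \<le> real k * b * PN k x" using ab S2 P by simp_all
    have "N1 x \<le> PN k x + real k * (a * PN k x + b * S2)" using 1 by (simp add: N1_def)
    also have "\<dots> \<le> C * (PN k x + S2)" using 2 S2 by (simp add: C_def algebra_simps)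
    finally show ?thesis by (simp add: N2_def S2_def)
  qed
  have "\<exists>K. \<forall>x\<in>D. N2 x \<le> K * N1 x"
  proof (rule two_norm[where sc = sc and ?N1.0 = N1 and ?N2.0 = N2 and C = C])
    show "0 \<in> D" by (rule D0)
    show "\<And>x y. x\<in>D \<Longrightarrow> y\<in>D \<Longrightarrow> x - y \<in> D" by (rule Ddiff)
    show "\<And>x y. x\<in>D \<Longrightarrow> y\<in>D \<Longrightarrow> x + y \<in> D" by (rule Dadd)
    show "\<And>c x. x\<in>D \<Longrightarrow> sc c x \<in> D" by (rule Dsc)
    show "sc a (sc b x) = sc (a*b) x" if "x\<in>D" for a b x by (simp add: sc_def)
    show "sc 1 x = x" if "x\<in>D" for x by (simp add: sc_def)
    show "sc a (x-y) = sc a x - sc a y" if "x\<in>D" "y\<in>D" for a x y by (simp add: sc_def fun_eq_iff scaleR_diff_right)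
    show "\<And>x. 0 \<le> N1 x" by (simp add: N1_def PN_nn add_nonneg_nonneg)
    show "\<And>x. 0 \<le> N2 x" by (simp add: N2_def PN_nn add_nonneg_nonneg sum_nonneg)
    show "N1 (x + y) \<le> N1 x + N1 y" if "x\<in>D" "y\<in>D" for x y
      using PN_add[of k x y] PN_add[of k "BA A k x" "BA A k y"] BAadd[OF that] by (simp add: N1_def)
    show "N1 (x - y) = N1 (y - x)" if "x\<in>D" "y\<in>D" for x y
      using PN_sym[of k x y] PN_sym[of k "BA A k x" "BA A k y"] BAdiff[OF that] BAdiff[OF that(2,1)]
      by (simp add: N1_def)
    show "N1 (sc c x) = \<bar>c\<bar> * N1 x" if "x\<in>D" for c x
      using BAsc[OF that, of c] by (simp add: N1_def sc_def PN_sc distrib_left)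
    show "N1 0 = 0" by (simp add: N1_def BA0 PN_zero)
    show "x = 0" if "x\<in>D" "N1 x = 0" for x
    proof
      fix i
      have "PN k x = 0" using that PN_nn[of k x] PN_nn[of k "BA A k x"] by (simp add: N1_def)
      then have "\<forall>i\<in>{1..k}. norm (x i) = 0" unfolding PN_def by (simp add: sum_nonneg_eq_0_iff)
      then show "x i = 0 i" using xout[OF that(1)] by (cases "i\<in>{1..k}") auto
    qed
    show "N2 (x + y) \<le> N2 x + N2 y" if "x\<in>D" "y\<in>D" for x y
    proof -
      have "(\<Sum>i=1..k. norm (A i i ((x + y) i))) \<le> (\<Sum>i=1..k. norm (A i i (x i)) + norm (A i i (y i)))"
        using Aii_add[OF that] by (intro sum_mono) (simp add: norm_triangle_ineq)
      then show ?thesis using PN_add[of k x y] by (simp add: N2_def sum.distrib)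
    qed
    show "N2 (x - y) = N2 (y - x)" if "x\<in>D" "y\<in>D" for x y
    proof -
      have "(\<Sum>i=1..k. norm (A i i ((x - y) i))) = (\<Sum>i=1..k. norm (A i i ((y - x) i)))"
        using Aii_diff[OF that] Aii_diff[OF that(2,1)] by (intro sum.cong) (simp_all add: norm_minus_commute)
      then show ?thesis using PN_sym[of k x y] by (simp add: N2_def)
    qed
    show "N2 (sc c x) = \<bar>c\<bar> * N2 x" if "x\<in>D" for c x
    proof -
      have "(\<Sum>i=1..k. norm (A i i (sc c x i))) = \<bar>c\<bar> * (\<Sum>i=1..k. norm (A i i (x i)))"
        using Aii_sc[OF that] by (simp add: sum_distrib_left)
      then show ?thesis by (simp add: N2_def sc_def PN_sc distrib_left)
    qed
    show "N2 0 = 0" using lin_op_props(7)[OF LA] by (simp add: N2_def PN_zero)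
    show "N1 x \<le> C * N2 x" if "x\<in>D" for x using dom that by blast
    show "\<exists>x\<in>D. (\<lambda>m. N1 (f m - x)) \<longlonglongrightarrow> 0"
      if fD: "\<forall>m. f m \<in> D" and fC: "\<forall>e>0. \<exists>M. \<forall>m k. M \<le> m \<longrightarrow> M \<le> k \<longrightarrow> N1 (f m - f k) < e" for f
    proof -
      have "\<exists>L. (\<lambda>m. f m i) \<longlonglongrightarrow> L" if i: "i\<in>{1..k}" for i
      proof (rule cauchy_comp[where f=f and N=N1, OF fC])
        fix m m' :: nat
        have "norm (f m i - f m' i) \<le> PN k (f m - f m')" using PN_comp[OF i, of "f m - f m'"] by simp
        then show "norm (f m i - f m' i) \<le> N1 (f m - f m')"
          using PN_nn[of k "BA A k (f m - f m')"] by (simp add: N1_def)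
      qed
      then obtain xl where xl: "\<forall>i\<in>{1..k}. (\<lambda>m. f m i) \<longlonglongrightarrow> xl i" by metis
      have "\<exists>L. (\<lambda>m. BA A k (f m) i) \<longlonglongrightarrow> L" if i: "i\<in>{1..k}" for i
      proof (rule cauchy_comp[where f=f and N=N1, OF fC])
        fix m m' :: nat
        have "norm (BA A k (f m) i - BA A k (f m') i) = norm (BA A k (f m - f m') i)"
          using BAdiff fD by simp
        also have "\<dots> \<le> PN k (BA A k (f m - f m'))" by (rule PN_comp[OF i])
        finally show "norm (BA A k (f m) i - BA A k (f m') i) \<le> N1 (f m - f m')"
          using PN_nn[of k "f m - f m'"] by (simp add: N1_def)
      qed
      then obtain yl where yl: "\<forall>i\<in>{1..k}. (\<lambda>m. BA A k (f m) i) \<longlonglongrightarrow> yl i" by metis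
      define x where "x i = (if i \<in> {1..k} then xl i else 0)" for i
      define y where "y i = (if i \<in> {1..k} then yl i else 0)" for i
      have XP: "csubspace (X i) \<and> closed (X i)" if "i\<in>{1..k}" for i
        using Xb that by (simp add: banach_subspace_def)
      have "x \<in> PS X k"
      proof -
        have "xl i \<in> X i" if i: "i\<in>{1..k}" for i
        proof (rule closed_sequentially[of "X i" "\<lambda>m. f m i"])
          show "closed (X i)" using XP i by blast
          show "f m i \<in> X i" for m using xin[of "f m" i i] fD i lin_op_props(2)[OF LA[OF i i]] by blast
          show "(\<lambda>m. f m i) \<longlonglongrightarrow> xl i" using xl i by blast
        qed
        then show ?thesis by (simp add: PS_def x_def)
      qed
      moreover have "y \<in> PS X k"
      proof -
        have "yl i \<in> X i" if i: "i\<in>{1..k}" for i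
        proof (rule closed_sequentially[of "X i" "\<lambda>m. BA A k (f m) i"])
          show "closed (X i)" using XP i by blast
          show "BA A k (f m) i \<in> X i" for m
            unfolding BA_def using i
            by (simp, intro csub_sum[OF XP[OF i, THEN conjunct1]])
               (use xin fD lin_op_props(3)[OF LA[OF i]] in auto)
          show "(\<lambda>m. BA A k (f m) i) \<longlonglongrightarrow> yl i" using yl i by blast
        qed
        then show ?thesis by (simp add: PS_def y_def)
      qed
      moreover have t1: "(\<lambda>m. PN k (\<lambda>i. f m i - x i)) \<longlonglongrightarrow> 0"
        by (rule PN_tendsto) (use xl in \<open>simp add: x_def\<close>)
      moreover have t2: "(\<lambda>m. PN k (\<lambda>i. BA A k (f m) i - y i)) \<longlonglongrightarrow> 0"
        by (rule PN_tendsto) (use yl in \<open>simp add: y_def\<close>)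
      moreover have "\<forall>m. f m \<in> BD DA k" using fD by (simp add: D_def)
      ultimately have xy: "x \<in> BD DA k \<and> BA A k x = y" using Bc unfolding block_closed_def by blast
      then have xD: "x \<in> D" by (simp add: D_def)
      have E: "N1 (f m - x) = PN k (\<lambda>i. f m i - x i) + PN k (\<lambda>i. BA A k (f m) i - y i)" for m
      proof -
        have "f m - x = (\<lambda>i. f m i - x i)" by (rule ext) simp
        moreover have "BA A k (f m - x) = (\<lambda>i. BA A k (f m) i - y i)"
          using BAdiff[of "f m" x] fD xD xy by (simp add: fun_eq_iff)
        ultimately show ?thesis by (simp add: N1_def)
      qed
      have "(\<lambda>m. N1 (f m - x)) \<longlonglongrightarrow> 0"
        unfolding E using tendsto_add[OF t1 t2] by simp
      then show ?thesis using xD by blast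
    qed
    show "\<exists>x\<in>D. (\<lambda>m. N2 (f m - x)) \<longlonglongrightarrow> 0"
      if fD: "\<forall>m. f m \<in> D" and fC: "\<forall>e>0. \<exists>M. \<forall>m k. M \<le> m \<longrightarrow> M \<le> k \<longrightarrow> N2 (f m - f k) < e" for f
    proof -
      have "\<exists>L. (\<lambda>m. f m i) \<longlonglongrightarrow> L" if i: "i\<in>{1..k}" for i
      proof (rule cauchy_comp[where f=f and N=N2, OF fC])
        fix m m' :: nat
        have "norm (f m i - f m' i) \<le> PN k (f m - f m')" using PN_comp[OF i, of "f m - f m'"] by simp
        then show "norm (f m i - f m' i) \<le> N2 (f m - f m')"
          by (simp add: N2_def sum_nonneg add_increasing2)
      qed
      then obtain xl where xl: "\<forall>i\<in>{1..k}. (\<lambda>m. f m i) \<longlonglongrightarrow> xl i" by metis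
      have "\<exists>L. (\<lambda>m. A i i (f m i)) \<longlonglongrightarrow> L" if i: "i\<in>{1..k}" for i
      proof (rule cauchy_comp[where f=f and N=N2, OF fC])
        fix m m' :: nat
        have "norm (A i i (f m i) - A i i (f m' i)) = norm (A i i ((f m - f m') i))"
          using Aii_diff fD i by simp
        also have "\<dots> \<le> (\<Sum>j=1..k. norm (A j j ((f m - f m') j)))"
          by (rule member_le_sum[of i "{1..k}" "\<lambda>j. norm (A j j ((f m - f m') j))"]) (use i in auto)
        finally show "norm (A i i (f m i) - A i i (f m' i)) \<le> N2 (f m - f m')"
          using PN_nn[of k "f m - f m'"] by (simp add: N2_def)
      qed
      then obtain yl where yl: "\<forall>i\<in>{1..k}. (\<lambda>m. A i i (f m i)) \<longlonglongrightarrow> yl i" by metis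
      have gr: "xl i \<in> DA i i \<and> A i i (xl i) = yl i" if i: "i\<in>{1..k}" for i
        using closed_graph_lim[of "DA i i" "A i i" "\<lambda>m. f m i" "xl i" "yl i"] Aclosed i xl yl xin fD
        by blast
      define x where "x i = (if i \<in> {1..k} then xl i else 0)" for i
      have xD: "x \<in> D" unfolding Dmem x_def using gr by simp
      have t1: "(\<lambda>m. PN k (\<lambda>i. f m i - x i)) \<longlonglongrightarrow> 0"
        by (rule PN_tendsto) (use xl in \<open>simp add: x_def\<close>)
      have t2: "(\<lambda>m. PN k (\<lambda>i. A i i (f m i) - yl i)) \<longlonglongrightarrow> 0"
        by (rule PN_tendsto) (use yl in simp)
      have E: "N2 (f m - x) = PN k (\<lambda>i. f m i - x i) + PN k (\<lambda>i. A i i (f m i) - yl i)" for m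
      proof -
        have "f m - x = (\<lambda>i. f m i - x i)" by (rule ext) simp
        moreover have "(\<Sum>i=1..k. norm (A i i ((f m - x) i))) = PN k (\<lambda>i. A i i (f m i) - yl i)"
          unfolding PN_def using Aii_diff[of "f m" x] fD xD gr by (intro sum.cong) (simp_all add: x_def)
        ultimately show ?thesis by (simp add: N2_def)
      qed
      have "(\<lambda>m. N2 (f m - x)) \<longlonglongrightarrow> 0"
        unfolding E using tendsto_add[OF t1 t2] by simp
      then show ?thesis using xD by blast
    qed
  qed
  then show ?thesis by (simp add: D_def N1_def N2_def)
qed
lemma bc1:
  assumes "closed_op (DA 1 1) (A 1 1)"
  shows "block_closed X DA A 1"
  unfolding block_closed_def
proof (intro allI impI, elim conjE)
  fix xs x y
  assume xs: "\<forall>m. xs m \<in> BD DA 1" and x: "x \<in> PS X 1" and y: "y \<in> PS X 1"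
    and t1: "(\<lambda>m. PN 1 (\<lambda>i. xs m i - x i)) \<longlonglongrightarrow> 0"
    and t2: "(\<lambda>m. PN 1 (\<lambda>i. BA A 1 (xs m) i - y i)) \<longlonglongrightarrow> 0"
  have "(\<lambda>m. norm (xs m 1 - x 1)) \<longlonglongrightarrow> 0" using t1 by (simp add: PN_def)
  then have c1: "(\<lambda>m. xs m 1) \<longlonglongrightarrow> x 1" by (simp add: tendsto_norm_zero_iff LIM_zero_iff)
  have "(\<lambda>m. norm (A 1 1 (xs m 1) - y 1)) \<longlonglongrightarrow> 0" using t2 by (simp add: PN_def BA_def)
  then have c2: "(\<lambda>m. A 1 1 (xs m 1)) \<longlonglongrightarrow> y 1" by (simp add: tendsto_norm_zero_iff LIM_zero_iff)
  have "\<And>m. xs m 1 \<in> DA 1 1" using xs by (simp add: BD_def PS_def)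
  then have g: "x 1 \<in> DA 1 1 \<and> A 1 1 (x 1) = y 1" using closed_graph_lim[OF assms _ c1 c2] by blast
  have xo: "x i = 0" if "i \<noteq> 1" for i using x that by (simp add: PS_def)
  have yo: "y i = 0" if "i \<noteq> 1" for i using y that by (simp add: PS_def)
  show "x \<in> BD DA 1 \<and> BA A 1 x = y"
  proof
    show "x \<in> BD DA 1" using g xo by (auto simp: BD_def PS_def)
    show "BA A 1 x = y"
    proof
      fix i show "BA A 1 x i = y i"
        using g yo by (cases "i = 1") (auto simp: BA_def)
    qed
  qed
qed

theorem lemma3p5:
  fixes X :: "nat \<Rightarrow> 'a::{complex_normed_vector,banach} set"
    and A :: "nat \<Rightarrow> nat \<Rightarrow> 'a \<Rightarrow> 'a" and DA :: "nat \<Rightarrow> nat \<Rightarrow> 'a set"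
    and T :: "nat \<Rightarrow> 'a \<Rightarrow> 'a" and DT :: "nat \<Rightarrow> 'a set"
    and n :: nat
  assumes n2: "n \<ge> 2"
    and Xb: "\<forall>i\<in>{1..n}. banach_subspace (X i)"
    and Alin: "\<forall>i\<in>{1..n}. \<forall>j\<in>{1..n}. lin_op (X j) (X i) (DA i j) (A i j)"
    and Aclosed: "\<forall>i\<in>{1..n}. closed_op (DA i i) (A i i)"
    and Arel: "\<forall>i\<in>{1..n}. \<forall>j\<in>{1..n}. i \<noteq> j \<longrightarrow>
                 rel_bounded_gen norm norm (DA i j) (A i j) (DA j j) (A j j)"
    and Tlin: "\<forall>j\<in>{1..n-1}. lin_op (X j) (X n) (DT j) (T j)"
    and Trel: "\<forall>j\<in>{1..n-1}. rel_bounded_gen norm norm (DT j) (T j) (DA j j) (A j j)"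
    and Bclosed: "\<forall>k\<in>{2..n}. block_closed X DA A k"
  shows "((\<forall>k\<in>{2..n-2}. spec (X k) (DA k k) (A k k) \<union> block_spec X DA A k \<noteq> UNIV) \<longrightarrow>
           (\<forall>l. l \<notin> spec (X (n-1)) (DA (n-1) (n-1)) (A (n-1) (n-1)) \<union> block_spec X DA A (n-1) \<longrightarrow>
              (\<forall>y\<in>PS X (n-1). the_inv_into (BD DA (n-1)) (\<lambda>x i. scaleC l (x i) - BA A (n-1) x i) y
                                  \<in> PS DT (n-1)) \<and>
              (\<exists>C. \<forall>y\<in>PS X (n-1).
                 norm (rowT T (n-1) (the_inv_into (BD DA (n-1)) (\<lambda>x i. scaleC l (x i) - BA A (n-1) x i) y))
                   \<le> C * PN (n-1) y)))
       \<and> ((\<forall>k\<in>{2..n-1}. spec (X k) (DA k k) (A k k) \<union> block_spec X DA A k \<noteq> UNIV) \<longrightarrow>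
           rel_bounded_gen (PN (n-1)) norm (PS DT (n-1)) (rowT T (n-1)) (BD DA (n-1)) (BA A (n-1)))"
proof -
  define k where "k = n - 1"
  have k1: "k \<ge> 1" and kn: "k \<le> n" using n2 by (auto simp: k_def)
  have sub: "{1..k} \<subseteq> {1..n}" using kn by auto
  have Bc: "block_closed X DA A k"
  proof (cases "k \<ge> 2")
    case True then show ?thesis using Bclosed kn by auto
  next
    case False
    then have "k = 1" using k1 by simp
    then show ?thesis using bc1[of DA A X] Aclosed n2 by auto
  qed
  obtain K where K: "\<forall>x\<in>BD DA k. PN k x + (\<Sum>i=1..k. norm (A i i (x i))) \<le> K * (PN k x + PN k (BA A k x))"
  proof -
    have 1: "\<forall>i\<in>{1..k}. banach_subspace (X i)" using Xb sub by blast
    have 2: "\<forall>i\<in>{1..k}. \<forall>j\<in>{1..k}. lin_op (X j) (X i) (DA i j) (A i j)" using Alin sub by blast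
    have 3: "\<forall>i\<in>{1..k}. closed_op (DA i i) (A i i)" using Aclosed sub by blast
    have 4: "\<forall>i\<in>{1..k}. \<forall>j\<in>{1..k}. i \<noteq> j \<longrightarrow> rel_bounded_gen norm norm (DA i j) (A i j) (DA j j) (A j j)"
      using Arel sub by blast
    show ?thesis using core[OF 1 2 3 4 Bc] that by blast
  qed
  define K' where "K' = max K 0"
  have K': "K' \<ge> 0" by (simp add: K'_def)
  have KK: "(\<Sum>i=1..k. norm (A i i (x i))) \<le> K' * (PN k x + PN k (BA A k x))" if x: "x \<in> BD DA k" for x
  proof -
    have "(\<Sum>i=1..k. norm (A i i (x i))) \<le> K * (PN k x + PN k (BA A k x))"
    proof -
      have "PN k x + (\<Sum>i=1..k. norm (A i i (x i))) \<le> K * (PN k x + PN k (BA A k x))" using K x by blast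
      then show ?thesis using PN_nn[of k x] by linarith
    qed
    also have "\<dots> \<le> K' * (PN k x + PN k (BA A k x))"
      using PN_nn[of k x] PN_nn[of k "BA A k x"] by (intro mult_right_mono) (auto simp: K'_def)
    finally show ?thesis .
  qed
  obtain a b where ab: "a \<ge> 0" "b \<ge> 0"
    "\<forall>j\<in>{1..k}. \<forall>v\<in>DA j j. norm (T j v) \<le> a * norm v + b * norm (A j j v)"
  proof -
    have "\<forall>j\<in>{1..k}. \<exists>a b. a \<ge> 0 \<and> b \<ge> 0 \<and> (\<forall>v\<in>DA j j. norm (T j v) \<le> a * norm v + b * norm (A j j v))"
      using Trel by (auto simp: rel_bounded_gen_def k_def)
    then show ?thesis using that uniform_bound[of "{1..k}" "\<lambda>j. DA j j" "\<lambda>j v. norm (T j v)"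
      "\<lambda>j v. norm v" "\<lambda>j v. norm (A j j v)"] by auto
  qed
  have BDsub: "BD DA k \<subseteq> PS DT k"
  proof
    fix x assume x: "x \<in> BD DA k"
    have "DA j j \<subseteq> DT j" if "j \<in> {1..k}" for j using Trel that by (auto simp: rel_bounded_gen_def k_def)
    then show "x \<in> PS DT k" using x by (auto simp: BD_def PS_def)
  qed
  have Tb: "norm (rowT T k x) \<le> (a + b * K') * PN k x + (b * K') * PN k (BA A k x)"
    if x: "x \<in> BD DA k" for x
  proof -
    have "norm (rowT T k x) \<le> (\<Sum>j=1..k. norm (T j (x j)))" unfolding rowT_def by (rule norm_sum)
    also have "\<dots> \<le> (\<Sum>j=1..k. a * norm (x j) + b * norm (A j j (x j)))"
    proof (rule sum_mono)
      fix j assume j: "j \<in> {1..k}"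
      then have "x j \<in> DA j j" using x by (simp add: BD_def PS_def)
      then show "norm (T j (x j)) \<le> a * norm (x j) + b * norm (A j j (x j))" using ab(3) j by blast
    qed
    also have "\<dots> = a * PN k x + b * (\<Sum>j=1..k. norm (A j j (x j)))"
      by (simp add: PN_def sum.distrib sum_distrib_left)
    also have "\<dots> \<le> a * PN k x + b * (K' * (PN k x + PN k (BA A k x)))"
      using KK[OF x] ab by (intro add_left_mono mult_left_mono) auto
    also have "\<dots> = (a + b * K') * PN k x + (b * K') * PN k (BA A k x)" by (simp add: algebra_simps)
    finally show ?thesis .
  qed
  have rel: "rel_bounded_gen (PN k) norm (PS DT k) (rowT T k) (BD DA k) (BA A k)"
    unfolding rel_bounded_gen_def
  proof (intro conjI exI)
    show "BD DA k \<subseteq> PS DT k" by (rule BDsub)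
    show "0 \<le> a + b * K'" "0 \<le> b * K'" using ab K' by auto
    show "\<forall>x\<in>BD DA k. norm (rowT T k x) \<le> (a + b * K') * PN k x + b * K' * PN k (BA A k x)"
      using Tb by blast
  qed
  have part1: "\<forall>l. l \<notin> spec (X k) (DA k k) (A k k) \<union> block_spec X DA A k \<longrightarrow>
              (\<forall>y\<in>PS X k. the_inv_into (BD DA k) (\<lambda>x i. scaleC l (x i) - BA A k x i) y \<in> PS DT k) \<and>
              (\<exists>C. \<forall>y\<in>PS X k.
                 norm (rowT T k (the_inv_into (BD DA k) (\<lambda>x i. scaleC l (x i) - BA A k x i) y))
                   \<le> C * PN k y)"
  proof (intro allI impI conjI)
    fix l assume "l \<notin> spec (X k) (DA k k) (A k k) \<union> block_spec X DA A k"
    then have ro: "resolvent_ok (PS X k) (PN k) (BD DA k) (\<lambda>x i. scaleC l (x i) - BA A k x i)"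
      by (simp add: block_spec_def)
    define g where "g = (\<lambda>x i. scaleC l (x i) - BA A k x i)"
    have bij: "bij_betw g (BD DA k) (PS X k)" using ro by (simp add: resolvent_ok_def g_def)
    obtain C0 where C0: "\<forall>y\<in>PS X k. PN k (the_inv_into (BD DA k) g y) \<le> C0 * PN k y"
      using ro by (auto simp: resolvent_ok_def g_def)
    define C0' where "C0' = max C0 0"
    have inj: "inj_on g (BD DA k)" and img: "g ` BD DA k = PS X k" using bij by (auto simp: bij_betw_def)
    have vD: "the_inv_into (BD DA k) g y \<in> BD DA k" if "y \<in> PS X k" for y
      using the_inv_into_into[OF inj, of y "BD DA k"] img that by auto
    have gv: "g (the_inv_into (BD DA k) g y) = y" if "y \<in> PS X k" for y
      using f_the_inv_into_f[OF inj, of y] img that by auto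
    show "\<forall>y\<in>PS X k. the_inv_into (BD DA k) (\<lambda>x i. scaleC l (x i) - BA A k x i) y \<in> PS DT k"
      using vD BDsub unfolding g_def by blast
    show "\<exists>C. \<forall>y\<in>PS X k.
                 norm (rowT T k (the_inv_into (BD DA k) (\<lambda>x i. scaleC l (x i) - BA A k x i) y))
                   \<le> C * PN k y"
    proof (intro exI ballI)
      fix y assume y: "y \<in> PS X k"
      define v where "v = the_inv_into (BD DA k) g y"
      have v: "v \<in> BD DA k" using vD[OF y] by (simp add: v_def)
      have gvy: "g v = y" using gv[OF y] by (simp add: v_def)
      have Pv: "PN k v \<le> C0' * PN k y"
      proof -
        have "PN k v \<le> C0 * PN k y" using C0 y by (simp add: v_def)
        also have "\<dots> \<le> C0' * PN k y" using PN_nn[of k y] by (intro mult_right_mono) (auto simp: C0'_def)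
        finally show ?thesis .
      qed
      have PBA: "PN k (BA A k v) \<le> cmod l * PN k v + PN k y"
      proof -
        have "PN k (BA A k v) \<le> (\<Sum>i=1..k. cmod l * norm (v i) + norm (y i))"
          unfolding PN_def
        proof (rule sum_mono)
          fix i
          have "y i = scaleC l (v i) - BA A k v i" using gvy by (auto simp: g_def)
          then have "BA A k v i = scaleC l (v i) - y i" by (simp add: algebra_simps)
          then have "norm (BA A k v i) \<le> norm (scaleC l (v i)) + norm (y i)"
            by (simp add: norm_triangle_ineq4)
          then show "norm (BA A k v i) \<le> cmod l * norm (v i) + norm (y i)" by (simp add: norm_scaleC)
        qed
        also have "\<dots> = cmod l * PN k v + PN k y" by (simp add: PN_def sum.distrib sum_distrib_left)
        finally show ?thesis .
      qed
      have "norm (rowT T k v) \<le> (a + b * K') * PN k v + (b * K') * PN k (BA A k v)" by (rule Tb[OF v])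
      also have "\<dots> \<le> (a + b * K') * (C0' * PN k y) + (b * K') * (cmod l * (C0' * PN k y) + PN k y)"
      proof -
        have s1: "(a + b*K') * PN k v \<le> (a + b*K') * (C0' * PN k y)"
          using Pv ab K' by (intro mult_left_mono) auto
        have "cmod l * PN k v \<le> cmod l * (C0' * PN k y)" using Pv by (intro mult_left_mono) auto
        then have s2: "PN k (BA A k v) \<le> cmod l * (C0' * PN k y) + PN k y" using PBA by linarith
        have s3: "(b*K') * PN k (BA A k v) \<le> (b*K') * (cmod l * (C0' * PN k y) + PN k y)"
          using s2 ab K' by (intro mult_left_mono) auto
        show ?thesis using s1 s3 by linarith
      qed
      also have "\<dots> = ((a + b * K') * C0' + (b * K') * (cmod l * C0' + 1)) * PN k y"
        by (simp add: algebra_simps)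
      finally show "norm (rowT T k (the_inv_into (BD DA k) (\<lambda>x i. scaleC l (x i) - BA A k x i) y))
          \<le> ((a + b * K') * C0' + (b * K') * (cmod l * C0' + 1)) * PN k y"
        by (simp add: v_def g_def)
    qed
  qed
  show ?thesis using part1 rel by (simp add: k_def)
qed

end
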